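(* Let each $f_\xi:\mathbb{R}^d\to\mathbb{R}$, $\xi\sim\mathcal{D}$, be differentiable and $\mu$-strongly convex with $\mu>0$, let $f=\mathbb{E}_{\xi\sim\mathcal{D}}[f_\xi]$ with minimizer $x_\star$, and define $\sigma_\star^2:=\mathbb{E}_{\xi\sim\mathcal{D}}\|\nabla f_\xi(x_\star)\|^2$. Let $x_0\in\mathbb{R}^d$ be arbitrary and consider SPPM: $x_{k+1}=\operatorname{prox}_{\gamma f_{\xi_k}}(x_k)$, with $\xi_k\sim\mathcal{D}$ sampled independently at each step. Then for any $\gamma>0$ and any $k\ge0$, $$\mathbb{E}\|x_k-x_\star\|^2\le\left(\frac{1}{1+\gamma\mu}\right)^{2k}\|x_0-x_\star\|^2+\frac{\gamma\sigma_\star^2}{\gamma\mu^2+2\mu}.$$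
   Context: $\operatorname{prox}_{\gamma\phi}(y):=\arg\min_{x\in\mathbb{R}^d}\{\phi(x)+\frac{1}{2\gamma}\|x-y\|^2\}$. $\mu$-strong convexity of $g$: $g(y)+\langle\nabla g(y),x-y\rangle+\frac{\mu}{2}\|x-y\|^2\le g(x)$ for all $x,y$. Differentiation and expectation are assumed interchangeable, so $\nabla f=\mathbb{E}[\nabla f_\xi]$. *)

theory Defs
  imports "HOL-Probability.Probability"
begin

definition prox :: "real \<Rightarrow> ('a::real_normed_vector \<Rightarrow> real) \<Rightarrow> 'a \<Rightarrow> 'a" where
  "prox \<gamma> \<phi> y = arg_min (\<lambda>x. \<phi> x + (norm (x - y))\<^sup>2 / (2 * \<gamma>)) (\<lambda>_. True)"

definition strongly_convex_grad :: "real \<Rightarrow> ('a::real_inner \<Rightarrow> real) \<Rightarrow> ('a \<Rightarrow> 'a) \<Rightarrow> bool" where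
  "strongly_convex_grad \<mu> g dg \<longleftrightarrow>
     (\<forall>x y. g y + dg y \<bullet> (x - y) + \<mu> / 2 * (norm (x - y))\<^sup>2 \<le> g x)"

primrec sppm :: "real \<Rightarrow> ('b \<Rightarrow> 'a::real_normed_vector \<Rightarrow> real) \<Rightarrow> 'a \<Rightarrow> 'b stream \<Rightarrow> nat \<Rightarrow> 'a" where
  "sppm \<gamma> f x0 \<omega> 0 = x0"
| "sppm \<gamma> f x0 \<omega> (Suc k) = prox \<gamma> (f (\<omega> !! k)) (sppm \<gamma> f x0 \<omega> k)"

end

theory Submission
  imports Defs
begin

lemma prox_char:
  fixes f :: "'a::euclidean_space \<Rightarrow> real" and g :: "'a \<Rightarrow> 'a"
  assumes grad: "\<And>x. (f has_derivative (\<lambda>h. g x \<bullet> h)) (at x)"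
    and sc: "strongly_convex_grad \<mu> f g" and mu: "\<mu> > 0" and gamma: "\<gamma> > 0"
  shows "prox \<gamma> f x = x - \<gamma> *\<^sub>R g (prox \<gamma> f x)"
proof -
  define \<phi> where "\<phi> u = f u + (norm (u - x))\<^sup>2 / (2 * \<gamma>)" for u
  have cont: "continuous_on UNIV \<phi>"
  proof -
    have "continuous_on UNIV f"
      by (intro continuous_at_imp_continuous_on ballI has_derivative_continuous[OF grad])
    then show ?thesis unfolding \<phi>_def using gamma by (intro continuous_intros) auto
  qed
  define R where "R = 2 * norm (g x) / \<mu>"
  have R0: "R \<ge> 0" using mu by (simp add: R_def)
  have outside: "\<phi> x < \<phi> u" if "u \<notin> cball x R" for u
  proof -
    have r: "norm (u - x) > R" using that by (simp add: dist_norm norm_minus_commute)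
    have "f x + g x \<bullet> (u - x) + \<mu> / 2 * (norm (u - x))\<^sup>2 \<le> f u"
      using sc unfolding strongly_convex_grad_def by blast
    moreover have "g x \<bullet> (u - x) \<ge> - (norm (g x) * norm (u - x))"
      using Cauchy_Schwarz_ineq2[of "g x" "u - x"] by (smt (verit) abs_le_iff)
    moreover have "\<mu> / 2 * (norm (u - x))\<^sup>2 > norm (g x) * norm (u - x)"
    proof -
      have "norm (g x) = \<mu> * R / 2" using mu by (simp add: R_def)
      then have "norm (g x) * norm (u - x) = \<mu> / 2 * (R * norm (u - x))" by simp
      also have "\<dots> < \<mu> / 2 * (norm (u - x) * norm (u - x))"
        using r R0 mu by (intro mult_strict_left_mono mult_strict_right_mono) auto
      finally show ?thesis by (simp add: power2_eq_square)
    qed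
    moreover have "(norm (u - x))\<^sup>2 / (2 * \<gamma>) \<ge> 0" using gamma by simp
    ultimately show ?thesis unfolding \<phi>_def by simp
  qed
  obtain m where m: "m \<in> cball x R" "\<forall>y\<in>cball x R. \<phi> m \<le> \<phi> y"
    using continuous_attains_inf[of "cball x R" \<phi>] cont R0
    by (meson compact_cball cball_eq_empty continuous_on_subset linorder_not_less subset_UNIV)
  have mmin: "\<phi> m \<le> \<phi> u" for u
  proof (cases "u \<in> cball x R")
    case True then show ?thesis using m by auto
  next
    case False
    have "x \<in> cball x R" using R0 by simp
    then have "\<phi> m \<le> \<phi> x" using m by auto
    then show ?thesis using outside[OF False] by simp
  qed
  have ex: "\<exists>y. is_arg_min \<phi> (\<lambda>_. True) y"
    using mmin by (auto simp: is_arg_min_def not_less)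
  define y where "y = prox \<gamma> f x"
  have "is_arg_min \<phi> (\<lambda>_. True) y"
    unfolding y_def prox_def arg_min_def \<phi>_def[abs_def] using ex unfolding \<phi>_def[abs_def]
    by (rule someI_ex)
  then have ymin: "\<forall>u\<in>UNIV. \<phi> y \<le> \<phi> u" by (auto simp: is_arg_min_def not_less)
  have der: "(\<phi> has_derivative (\<lambda>h. g y \<bullet> h + (2 * ((y - x) \<bullet> h)) / (2 * \<gamma>))) (at y)"
  proof -
    have "((\<lambda>u. (u - x) \<bullet> (u - x)) has_derivative (\<lambda>h. (y - x) \<bullet> h + h \<bullet> (y - x))) (at y)"
      by (auto intro!: derivative_eq_intros)
    then have "((\<lambda>u. (norm (u - x))\<^sup>2) has_derivative (\<lambda>h. 2 * ((y - x) \<bullet> h))) (at y)"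
      by (simp add: power2_norm_eq_inner inner_commute)
    then show ?thesis unfolding \<phi>_def[abs_def] divide_inverse
      by (intro has_derivative_add grad has_derivative_mult_left)
  qed
  have Z0: "(\<lambda>h. g y \<bullet> h + (2 * ((y - x) \<bullet> h)) / (2 * \<gamma>)) = (\<lambda>v. 0)"
    using differential_zero_maxmin[OF _ open_UNIV der] ymin by blast
  have Z: "g y \<bullet> h + (2 * ((y - x) \<bullet> h)) / (2 * \<gamma>) = 0" for h
    using fun_cong[OF Z0, of h] by simp
  have "(g y + (1/\<gamma>) *\<^sub>R (y - x)) \<bullet> h = 0" for h
    using Z[of h] by (simp add: inner_add_left)
  then have v0: "g y + (1/\<gamma>) *\<^sub>R (y - x) = 0" by (metis inner_eq_zero_iff)
  have "\<gamma> *\<^sub>R (g y + (1/\<gamma>) *\<^sub>R (y - x)) = \<gamma> *\<^sub>R g y + (y - x)"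
    using gamma by (simp add: scaleR_right_distrib)
  then have "\<gamma> *\<^sub>R g y + (y - x) = 0" using v0 by simp
  then show ?thesis unfolding y_def[symmetric] by (simp add: algebra_simps)
qed

lemma contraction:
  fixes f :: "'a::euclidean_space \<Rightarrow> real" and g :: "'a \<Rightarrow> 'a"
  assumes sc: "strongly_convex_grad \<mu> f g" and mu: "\<mu> > 0" and gamma: "\<gamma> > 0"
    and yx: "y = x - \<gamma> *\<^sub>R g y"
  shows "(1 + \<gamma> * \<mu>)\<^sup>2 * (norm (y - xs))\<^sup>2 \<le> (norm (x - xs - \<gamma> *\<^sub>R g xs))\<^sup>2"
proof -
  define d where "d = y - xs"
  define e where "e = g y - g xs"
  have s1: "f xs + g xs \<bullet> (y - xs) + \<mu> / 2 * (norm (y - xs))\<^sup>2 \<le> f y"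
    and s2: "f y + g y \<bullet> (xs - y) + \<mu> / 2 * (norm (xs - y))\<^sup>2 \<le> f xs"
    using sc unfolding strongly_convex_grad_def by blast+
  have "norm (xs - y) = norm (y - xs)" by (rule norm_minus_commute)
  then have mono: "e \<bullet> d \<ge> \<mu> * (norm d)\<^sup>2"
    using s1 s2 unfolding d_def e_def
    by (simp add: inner_diff_left inner_diff_right algebra_simps)
  have en: "norm e \<ge> \<mu> * norm d"
  proof (cases "d = 0")
    case True then show ?thesis by simp
  next
    case False
    have "\<mu> * (norm d)\<^sup>2 \<le> norm e * norm d"
      using mono Cauchy_Schwarz_ineq2[of e d] by (smt (verit) abs_le_iff)
    then have "(\<mu> * norm d) * norm d \<le> norm e * norm d" by (simp add: power2_eq_square algebra_simps)
    then show ?thesis using False by simp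
  qed
  have "(\<mu> * norm d)\<^sup>2 \<le> (norm e)\<^sup>2"
    using en mu by (intro power_mono) auto
  have w: "x - xs - \<gamma> *\<^sub>R g xs = d + \<gamma> *\<^sub>R e"
    using yx unfolding d_def e_def by (simp add: algebra_simps)
  have "(norm (d + \<gamma> *\<^sub>R e))\<^sup>2 = (norm d)\<^sup>2 + 2 * \<gamma> * (e \<bullet> d) + \<gamma>\<^sup>2 * (norm e)\<^sup>2"
    unfolding power2_norm_eq_inner by (simp add: inner_add_left inner_add_right inner_commute algebra_simps power2_eq_square)
  also have "\<dots> \<ge> (norm d)\<^sup>2 + 2 * \<gamma> * (\<mu> * (norm d)\<^sup>2) + \<gamma>\<^sup>2 * (\<mu> * norm d)\<^sup>2"
    using mono \<open>(\<mu> * norm d)\<^sup>2 \<le> (norm e)\<^sup>2\<close> gamma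
    by (intro add_mono mult_left_mono) auto
  finally show ?thesis unfolding w d_def[symmetric]
    by (simp add: power2_eq_square algebra_simps)
qed

lemma alg_aux:
  fixes C P c2 g2 s B N :: real
  assumes "C = P * c2" "c2 * (g2 * s) = B * (1 - c2)"
  shows "P * (c2 * (N + g2 * s)) + B * (1 - P) = C * N + B * (1 - C)"
proof -
  have "P * (c2 * (g2 * s)) = P * (B * (1 - c2))" using assms(2) by simp
  then show ?thesis using assms(1) by (simp add: algebra_simps)
qed

lemma sppm_shift:
  "sppm \<gamma> f x0 (\<xi> ## \<omega>) (Suc k) = sppm \<gamma> f (prox \<gamma> (f \<xi>) x0) \<omega> k"
  by (induction k) auto

lemma sppm_meas:
  assumes prox_meas: "(\<lambda>(\<xi>, y). prox \<gamma> (f \<xi>) y) \<in> borel_measurable (D \<Otimes>\<^sub>M borel)"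
  shows "(\<lambda>\<omega>. sppm \<gamma> f x0 \<omega> k) \<in> borel_measurable (stream_space D)"
proof (induction k)
  case 0 then show ?case by simp
next
  case (Suc k)
  have "(\<lambda>\<omega>. (\<omega> !! k, sppm \<gamma> f x0 \<omega> k)) \<in> measurable (stream_space D) (D \<Otimes>\<^sub>M borel)"
    using Suc by (intro measurable_Pair measurable_snth)
  from measurable_compose[OF this prox_meas] show ?case by simp
qed

theorem mainTheorem3:
  fixes D :: "'b measure"
    and f :: "'b \<Rightarrow> 'a::euclidean_space \<Rightarrow> real"
    and g :: "'b \<Rightarrow> 'a \<Rightarrow> 'a"
    and \<mu> \<gamma> :: real and xs x0 :: 'a and k :: nat
  assumes D: "prob_space D"
    and grad: "\<And>\<xi> x. \<xi> \<in> space D \<Longrightarrow> (f \<xi> has_derivative (\<lambda>h. g \<xi> x \<bullet> h)) (at x)"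
    and sc: "\<And>\<xi>. \<xi> \<in> space D \<Longrightarrow> strongly_convex_grad \<mu> (f \<xi>) (g \<xi>)"
    and mu: "\<mu> > 0"
    and f_int: "\<And>x. integrable D (\<lambda>\<xi>. f \<xi> x)"
    and g_int: "\<And>x. integrable D (\<lambda>\<xi>. g \<xi> x)"
    and interchange: "\<And>x. ((\<lambda>y. \<integral>\<xi>. f \<xi> y \<partial>D) has_derivative
                              (\<lambda>h. (\<integral>\<xi>. g \<xi> x \<partial>D) \<bullet> h)) (at x)"
    and sigma_int: "integrable D (\<lambda>\<xi>. (norm (g \<xi> xs))\<^sup>2)"
    and xs_min: "\<And>x. (\<integral>\<xi>. f \<xi> xs \<partial>D) \<le> (\<integral>\<xi>. f \<xi> x \<partial>D)"
    and gamma: "\<gamma> > 0"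
    and prox_meas: "(\<lambda>(\<xi>, y). prox \<gamma> (f \<xi>) y) \<in> borel_measurable (D \<Otimes>\<^sub>M borel)"
  shows "(\<integral>\<^sup>+ \<omega>. ennreal ((norm (sppm \<gamma> f x0 \<omega> k - xs))\<^sup>2) \<partial>stream_space D)
           \<le> ennreal ((1 / (1 + \<gamma> * \<mu>)) ^ (2 * k) * (norm (x0 - xs))\<^sup>2
                      + \<gamma> * (\<integral>\<xi>. (norm (g \<xi> xs))\<^sup>2 \<partial>D) / (\<gamma> * \<mu>\<^sup>2 + 2 * \<mu>))"
proof -
  interpret D: prob_space D by (rule D)
  interpret S: prob_space "stream_space D" by (rule D.prob_space_stream_space)
  define c where "c = 1 / (1 + \<gamma> * \<mu>)"
  define \<sigma> where "\<sigma> = (\<integral>\<xi>. (norm (g \<xi> xs))\<^sup>2 \<partial>D)"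
  define Bs where "Bs = \<gamma> * \<sigma> / (\<gamma> * \<mu>\<^sup>2 + 2 * \<mu>)"
  have gm: "\<gamma> * \<mu> > 0" using gamma mu by simp
  have den: "\<gamma> * \<mu>\<^sup>2 + 2 * \<mu> > 0" using gamma mu by (simp add: add_pos_pos)
  have c0: "c > 0" and c1: "c \<le> 1" using gm by (auto simp: c_def)
  have \<sigma>0: "\<sigma> \<ge> 0" unfolding \<sigma>_def by (rule integral_nonneg_AE) auto
  have Bs0: "Bs \<ge> 0" unfolding Bs_def using \<sigma>0 gamma den by simp
  have G0: "(\<integral>\<xi>. g \<xi> xs \<partial>D) = 0"
  proof -
    have "(\<lambda>h. (\<integral>\<xi>. g \<xi> xs \<partial>D) \<bullet> h) = (\<lambda>v. 0)"
      by (rule differential_zero_maxmin[OF UNIV_I open_UNIV interchange[of xs]]) (use xs_min in auto)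
    from fun_cong[OF this, of "\<integral>\<xi>. g \<xi> xs \<partial>D"] show ?thesis by simp
  qed
  have key: "c\<^sup>2 * (\<gamma>\<^sup>2 * \<sigma>) = Bs * (1 - c\<^sup>2)"
  proof -
    have e: "(1 + \<gamma> * \<mu>)\<^sup>2 - 1 = \<gamma> * (\<gamma> * \<mu>\<^sup>2 + 2 * \<mu>)" by (simp add: power2_eq_square algebra_simps)
    have p: "(1 + \<gamma> * \<mu>) \<noteq> 0" using gm by simp
    have "1 - c\<^sup>2 = ((1 + \<gamma> * \<mu>)\<^sup>2 - 1) / (1 + \<gamma> * \<mu>)\<^sup>2"
      using p by (simp add: c_def power_divide field_simps)
    then have "Bs * (1 - c\<^sup>2) = \<gamma> * \<sigma> / (\<gamma> * \<mu>\<^sup>2 + 2 * \<mu>) * (\<gamma> * (\<gamma> * \<mu>\<^sup>2 + 2 * \<mu>)) / (1 + \<gamma> * \<mu>)\<^sup>2"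
      unfolding Bs_def e by simp
    also have "\<dots> = \<gamma>\<^sup>2 * \<sigma> / (1 + \<gamma> * \<mu>)\<^sup>2"
    proof -
      have "\<gamma> * \<sigma> / (\<gamma> * \<mu>\<^sup>2 + 2 * \<mu>) * (\<gamma> * (\<gamma> * \<mu>\<^sup>2 + 2 * \<mu>)) = \<gamma>\<^sup>2 * \<sigma>"
        using den by (simp add: power2_eq_square)
      then show ?thesis by simp
    qed
    also have "\<dots> = c\<^sup>2 * (\<gamma>\<^sup>2 * \<sigma>)" by (simp add: c_def power_divide)
    finally show ?thesis by simp
  qed
  have pt: "(norm (prox \<gamma> (f \<xi>) x - xs))\<^sup>2 \<le> c\<^sup>2 * (norm (x - xs - \<gamma> *\<^sub>R g \<xi> xs))\<^sup>2"
    if "\<xi> \<in> space D" for x \<xi>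
  proof -
    have "(1 + \<gamma> * \<mu>)\<^sup>2 * (norm (prox \<gamma> (f \<xi>) x - xs))\<^sup>2 \<le> (norm (x - xs - \<gamma> *\<^sub>R g \<xi> xs))\<^sup>2"
      by (rule contraction[OF sc[OF that] mu gamma prox_char[OF grad[OF that] sc[OF that] mu gamma]])
    then show ?thesis using gm unfolding c_def by (simp add: power_divide field_simps)
  qed
  have expand: "(norm (a - \<gamma> *\<^sub>R v))\<^sup>2 = (norm a)\<^sup>2 - 2 * \<gamma> * (a \<bullet> v) + \<gamma>\<^sup>2 * (norm v)\<^sup>2" for a v :: 'a
    unfolding power2_norm_eq_inner by (simp add: inner_diff_left inner_diff_right inner_commute algebra_simps power2_eq_square)
  have qint: "integrable D (\<lambda>\<xi>. (norm (a - \<gamma> *\<^sub>R g \<xi> xs))\<^sup>2)"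
    and qval: "(\<integral>\<xi>. (norm (a - \<gamma> *\<^sub>R g \<xi> xs))\<^sup>2 \<partial>D) = (norm a)\<^sup>2 + \<gamma>\<^sup>2 * \<sigma>" for a
  proof -
    have i1: "integrable D (\<lambda>\<xi>. a \<bullet> g \<xi> xs)" using g_int by simp
    have i2: "integrable D (\<lambda>\<xi>. \<gamma>\<^sup>2 * (norm (g \<xi> xs))\<^sup>2)" using sigma_int by simp
    have i3: "integrable D (\<lambda>\<xi>. 2 * \<gamma> * (a \<bullet> g \<xi> xs))" using i1 by simp
    have i4: "integrable D (\<lambda>\<xi>. (norm a)\<^sup>2 - 2 * \<gamma> * (a \<bullet> g \<xi> xs))" using i3 by simp
    show "integrable D (\<lambda>\<xi>. (norm (a - \<gamma> *\<^sub>R g \<xi> xs))\<^sup>2)"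
      unfolding expand by (intro Bochner_Integration.integrable_add i4 i2)
    have "(\<integral>\<xi>. (norm (a - \<gamma> *\<^sub>R g \<xi> xs))\<^sup>2 \<partial>D)
        = (\<integral>\<xi>. (norm a)\<^sup>2 - 2 * \<gamma> * (a \<bullet> g \<xi> xs) \<partial>D) + (\<integral>\<xi>. \<gamma>\<^sup>2 * (norm (g \<xi> xs))\<^sup>2 \<partial>D)"
      unfolding expand by (intro Bochner_Integration.integral_add i4 i2)
    also have "(\<integral>\<xi>. (norm a)\<^sup>2 - 2 * \<gamma> * (a \<bullet> g \<xi> xs) \<partial>D) = (norm a)\<^sup>2 - (\<integral>\<xi>. 2 * \<gamma> * (a \<bullet> g \<xi> xs) \<partial>D)"
      using i3 by (subst Bochner_Integration.integral_diff) (auto simp: D.prob_space)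
    also have "(\<integral>\<xi>. 2 * \<gamma> * (a \<bullet> g \<xi> xs) \<partial>D) = 0"
      using g_int G0 by simp
    also have "(\<integral>\<xi>. \<gamma>\<^sup>2 * (norm (g \<xi> xs))\<^sup>2 \<partial>D) = \<gamma>\<^sup>2 * \<sigma>"
      unfolding \<sigma>_def by simp
    finally show "(\<integral>\<xi>. (norm (a - \<gamma> *\<^sub>R g \<xi> xs))\<^sup>2 \<partial>D) = (norm a)\<^sup>2 + \<gamma>\<^sup>2 * \<sigma>" by simp
  qed
  have main: "(\<integral>\<^sup>+ \<omega>. ennreal ((norm (sppm \<gamma> f x0 \<omega> n - xs))\<^sup>2) \<partial>stream_space D)
      \<le> ennreal (c ^ (2 * n) * (norm (x0 - xs))\<^sup>2 + Bs * (1 - c ^ (2 * n)))" for n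
  proof (induction n arbitrary: x0)
    case 0
    show ?case using S.emeasure_space_1 by simp
  next
    case (Suc n)
    let ?B = "Bs * (1 - c ^ (2 * n))"
    have B0: "?B \<ge> 0" using Bs0 c0 c1 by (simp add: power_le_one)
    have cn0: "c ^ (2 * n) \<ge> 0" using c0 by simp
    have [measurable]: "(\<lambda>\<omega>. sppm \<gamma> f x0 \<omega> (Suc n)) \<in> borel_measurable (stream_space D)"
      by (rule sppm_meas[OF prox_meas])
    have meas: "(\<lambda>\<omega>. ennreal ((norm (sppm \<gamma> f x0 \<omega> (Suc n) - xs))\<^sup>2)) \<in> borel_measurable (stream_space D)"
      by measurable
    have "(\<integral>\<^sup>+ \<omega>. ennreal ((norm (sppm \<gamma> f x0 \<omega> (Suc n) - xs))\<^sup>2) \<partial>stream_space D)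
        = (\<integral>\<^sup>+ \<xi>. (\<integral>\<^sup>+ \<omega>. ennreal ((norm (sppm \<gamma> f (prox \<gamma> (f \<xi>) x0) \<omega> n - xs))\<^sup>2) \<partial>stream_space D) \<partial>D)"
      by (subst D.nn_integral_stream_space[OF meas]) (simp only: sppm_shift)
    also have "\<dots> \<le> (\<integral>\<^sup>+ \<xi>. ennreal (c ^ (2 * n) * (norm (prox \<gamma> (f \<xi>) x0 - xs))\<^sup>2 + ?B) \<partial>D)"
      by (rule nn_integral_mono) (rule Suc.IH)
    also have "\<dots> \<le> (\<integral>\<^sup>+ \<xi>. ennreal (c ^ (2 * n) * (c\<^sup>2 * (norm (x0 - xs - \<gamma> *\<^sub>R g \<xi> xs))\<^sup>2) + ?B) \<partial>D)"
      by (intro nn_integral_mono ennreal_leI add_right_mono mult_left_mono pt cn0)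
    also have "\<dots> = ennreal (\<integral>\<xi>. c ^ (2 * n) * (c\<^sup>2 * (norm (x0 - xs - \<gamma> *\<^sub>R g \<xi> xs))\<^sup>2) + ?B \<partial>D)"
      by (rule nn_integral_eq_integral) (use qint[of "x0 - xs"] B0 cn0 in auto)
    also have "(\<integral>\<xi>. c ^ (2 * n) * (c\<^sup>2 * (norm (x0 - xs - \<gamma> *\<^sub>R g \<xi> xs))\<^sup>2) + ?B \<partial>D)
        = c ^ (2 * n) * (c\<^sup>2 * ((norm (x0 - xs))\<^sup>2 + \<gamma>\<^sup>2 * \<sigma>)) + ?B"
      using qint[of "x0 - xs"] qval[of "x0 - xs"] by (simp add: D.prob_space)
    also have "\<dots> = c ^ (2 * Suc n) * (norm (x0 - xs))\<^sup>2 + Bs * (1 - c ^ (2 * Suc n))"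
    proof -
      have "c ^ (2 * Suc n) = c ^ (2 * n) * c\<^sup>2" by (simp add: power_add power_mult power2_eq_square)
      then show ?thesis using key by (rule alg_aux)
    qed
    finally show ?case .
  qed
  have "Bs * (1 - c ^ (2 * k)) \<le> Bs" using Bs0 c0 by (simp add: mult_left_le)
  then have "ennreal (c ^ (2 * k) * (norm (x0 - xs))\<^sup>2 + Bs * (1 - c ^ (2 * k)))
      \<le> ennreal ((1 / (1 + \<gamma> * \<mu>)) ^ (2 * k) * (norm (x0 - xs))\<^sup>2
                      + \<gamma> * (\<integral>\<xi>. (norm (g \<xi> xs))\<^sup>2 \<partial>D) / (\<gamma> * \<mu>\<^sup>2 + 2 * \<mu>))"
    unfolding c_def Bs_def \<sigma>_def by (intro ennreal_leI) simp
  with main[of k] show ?thesis by (rule order_trans)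
qed

end
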